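(* Let $(\varphi,\mathcal A,V)$ be a linear system with $\mathcal A$ and $V$ finite dimensional. (i) If $(\pi,S,T,W)$ is a principle dilation system of $(\varphi,\mathcal A,V)$ with $\dim W=(\dim\mathcal A)(\dim V)$, then every linearly minimal homomorphism dilation system of $(\varphi,\mathcal A,V)$ is irreducible, hence principle. (ii) If $(\pi,S,T,W)$ is a principle dilation system of $(\varphi,\mathcal A,V)$ and $(\pi_1,S_1,T_1,W_1)$ is a linearly minimal homomorphism dilation system with $\dim W_1\le\dim W$, then $(\pi_1,S_1,T_1,W_1)$ is irreducible.
   Context: Fix a field $\mathbb F$; all algebras and vector spaces are over $\mathbb F$, and $L(X)$ is the algebra of linear maps $X\to X$. A linear system $(\varphi,\mathcal A,V)$: $\mathcal A$ a unital associative algebra with unit $I$, $V$ a vector space, $\varphi:\mathcal A\to L(V)$ linear with $\varphi(I)=\mathrm{id}_V$. A homomorphism dilation system $(\pi,S,T,W)$: $W$ a vector space, $\pi:\mathcal A\to L(W)$ a unital homomorphism, $T:V\to W$ injective linear, $S:W\to V$ surjective linear, $\varphi(a)=S\pi(a)T$ for all $a$. It is linearly minimal if $W=\mathrm{span}\{\pi(a)Tv\}$, irreducible if $\ker S$ contains no nonzero subspace invariant under all $\pi(a)$, and principle if linearly minimal and irreducible. *)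

theory Defs
  imports Main "HOL.Vector_Spaces"
begin

definition unital_algebra ::
  "('f::field \<Rightarrow> 'a::ab_group_add \<Rightarrow> 'a) \<Rightarrow> ('a \<Rightarrow> 'a \<Rightarrow> 'a) \<Rightarrow> 'a \<Rightarrow> bool" where
  "unital_algebra sA mult one \<longleftrightarrow>
     vector_space sA \<and>
     (\<forall>x. Vector_Spaces.linear sA sA (\<lambda>y. mult x y)) \<and>
     (\<forall>y. Vector_Spaces.linear sA sA (\<lambda>x. mult x y)) \<and>
     (\<forall>x y z. mult (mult x y) z = mult x (mult y z)) \<and>
     (\<forall>x. mult one x = x \<and> mult x one = x)"

definition fin_dim :: "('f::field \<Rightarrow> 'v::ab_group_add \<Rightarrow> 'v) \<Rightarrow> bool" where
  "fin_dim s \<longleftrightarrow> (\<exists>B. finite B \<and> module.span s B = UNIV)"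

abbreviation dimension :: "('f::field \<Rightarrow> 'v::ab_group_add \<Rightarrow> 'v) \<Rightarrow> nat" where
  "dimension s \<equiv> vector_space.dim s UNIV"

definition linear_system ::
  "('f::field \<Rightarrow> 'a::ab_group_add \<Rightarrow> 'a) \<Rightarrow> ('a \<Rightarrow> 'a \<Rightarrow> 'a) \<Rightarrow> 'a \<Rightarrow>
   ('f \<Rightarrow> 'v::ab_group_add \<Rightarrow> 'v) \<Rightarrow> ('a \<Rightarrow> 'v \<Rightarrow> 'v) \<Rightarrow> bool" where
  "linear_system sA mult one sV \<phi> \<longleftrightarrow>
     unital_algebra sA mult one \<and> vector_space sV \<and>
     (\<forall>a. Vector_Spaces.linear sV sV (\<phi> a)) \<and>
     (\<forall>a b. \<phi> (a + b) = (\<lambda>v. \<phi> a v + \<phi> b v)) \<and>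
     (\<forall>c a. \<phi> (sA c a) = (\<lambda>v. sV c (\<phi> a v))) \<and>
     \<phi> one = id"

definition hom_dilation ::
  "('f::field \<Rightarrow> 'a::ab_group_add \<Rightarrow> 'a) \<Rightarrow> ('a \<Rightarrow> 'a \<Rightarrow> 'a) \<Rightarrow> 'a \<Rightarrow>
   ('f \<Rightarrow> 'v::ab_group_add \<Rightarrow> 'v) \<Rightarrow> ('a \<Rightarrow> 'v \<Rightarrow> 'v) \<Rightarrow>
   ('f \<Rightarrow> 'w::ab_group_add \<Rightarrow> 'w) \<Rightarrow> ('a \<Rightarrow> 'w \<Rightarrow> 'w) \<Rightarrow> ('w \<Rightarrow> 'v) \<Rightarrow> ('v \<Rightarrow> 'w) \<Rightarrow> bool" where
  "hom_dilation sA mult one sV \<phi> sW \<pi> S T \<longleftrightarrow>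
     vector_space sW \<and>
     (\<forall>a. Vector_Spaces.linear sW sW (\<pi> a)) \<and>
     (\<forall>a b. \<pi> (a + b) = (\<lambda>w. \<pi> a w + \<pi> b w)) \<and>
     (\<forall>c a. \<pi> (sA c a) = (\<lambda>w. sW c (\<pi> a w))) \<and>
     (\<forall>a b. \<pi> (mult a b) = \<pi> a \<circ> \<pi> b) \<and>
     \<pi> one = id \<and>
     Vector_Spaces.linear sV sW T \<and> inj T \<and>
     Vector_Spaces.linear sW sV S \<and> surj S \<and>
     (\<forall>a. \<phi> a = S \<circ> \<pi> a \<circ> T)"

definition linearly_minimal ::
  "('f::field \<Rightarrow> 'w::ab_group_add \<Rightarrow> 'w) \<Rightarrow> ('a \<Rightarrow> 'w \<Rightarrow> 'w) \<Rightarrow> ('v \<Rightarrow> 'w) \<Rightarrow> bool" where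
  "linearly_minimal sW \<pi> T \<longleftrightarrow> module.span sW {\<pi> a (T v) | a v. True} = UNIV"

definition irreducible_dil ::
  "('f::field \<Rightarrow> 'w::ab_group_add \<Rightarrow> 'w) \<Rightarrow> ('a \<Rightarrow> 'w \<Rightarrow> 'w) \<Rightarrow> ('w \<Rightarrow> 'v::zero) \<Rightarrow> bool" where
  "irreducible_dil sW \<pi> S \<longleftrightarrow>
     (\<forall>U. module.subspace sW U \<and> U \<subseteq> {w. S w = 0} \<and> (\<forall>a. \<pi> a ` U \<subseteq> U) \<longrightarrow> U = {0})"

definition principle_dil ::
  "('f::field \<Rightarrow> 'w::ab_group_add \<Rightarrow> 'w) \<Rightarrow> ('a \<Rightarrow> 'w \<Rightarrow> 'w) \<Rightarrow> ('w \<Rightarrow> 'v::zero) \<Rightarrow> ('v \<Rightarrow> 'w) \<Rightarrow> bool" where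
  "principle_dil sW \<pi> S T \<longleftrightarrow> linearly_minimal sW \<pi> T \<and> irreducible_dil sW \<pi> S"

end

theory Submission
  imports Defs
begin

lemma lin_add: "Vector_Spaces.linear s1 s2 f \<Longrightarrow> f (x + y) = f x + f y"
  by (simp add: linear_iff)
lemma lin_scale: "Vector_Spaces.linear s1 s2 f \<Longrightarrow> f (s1 c x) = s2 c (f x)"
  by (simp add: linear_iff)
lemma lin_0: "Vector_Spaces.linear s1 s2 f \<Longrightarrow> f 0 = 0"
  using lin_add[of s1 s2 f 0 0] by simp

lemma lin_comp: "Vector_Spaces.linear s1 s2 f \<Longrightarrow> Vector_Spaces.linear s2 s3 g
  \<Longrightarrow> Vector_Spaces.linear s1 s3 (\<lambda>x. g (f x))"
  by (simp add: linear_iff)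

lemma rel_ex:
  assumes h: "hom_dilation sA mult one sV \<phi> sW \<pi> S T"
    and h1: "hom_dilation sA mult one sV \<phi> sW1 \<pi>1 S1 T1"
    and lm: "linearly_minimal sW \<pi> T"
  shows "\<exists>y. \<forall>b. S (\<pi> b x) = S1 (\<pi>1 b y)"
proof -
  interpret W: vector_space sW using h by (simp add: hom_dilation_def)
  interpret W1: vector_space sW1 using h1 by (simp add: hom_dilation_def)
  have LS: "Vector_Spaces.linear sW sV (\<lambda>x. S (\<pi> b x))" for b
    using h lin_comp[of sW sW "\<pi> b" sV S] by (simp add: hom_dilation_def)
  have LS1: "Vector_Spaces.linear sW1 sV (\<lambda>x. S1 (\<pi>1 b x))" for b
    using h1 lin_comp[of sW1 sW1 "\<pi>1 b" sV S1] by (simp add: hom_dilation_def)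
  let ?P = "{x. \<exists>y. \<forall>b. S (\<pi> b x) = S1 (\<pi>1 b y)}"
  have sub: "W.subspace ?P"
    unfolding W.subspace_def
  proof (intro conjI ballI allI)
    show "0 \<in> ?P" using lin_0[OF LS] lin_0[OF LS1] by (auto intro!: exI[of _ 0])
  next
    fix x z assume "x \<in> ?P" "z \<in> ?P"
    then obtain y y' where "\<forall>b. S (\<pi> b x) = S1 (\<pi>1 b y)" "\<forall>b. S (\<pi> b z) = S1 (\<pi>1 b y')" by auto
    then show "x + z \<in> ?P" using lin_add[OF LS] lin_add[OF LS1] by (auto intro!: exI[of _ "y + y'"])
  next
    fix c x assume "x \<in> ?P"
    then obtain y where "\<forall>b. S (\<pi> b x) = S1 (\<pi>1 b y)" by auto
    then show "sW c x \<in> ?P" using lin_scale[OF LS] lin_scale[OF LS1] by (auto intro!: exI[of _ "sW1 c y"])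
  qed
  have gen: "{\<pi> a (T v) | a v. True} \<subseteq> ?P"
  proof clarify
    fix a v
    have "S (\<pi> b (\<pi> a (T v))) = S1 (\<pi>1 b (\<pi>1 a (T1 v)))" for b
    proof -
      have "S (\<pi> b (\<pi> a (T v))) = (S \<circ> \<pi> (mult b a) \<circ> T) v" using h by (simp add: hom_dilation_def)
      also have "\<dots> = \<phi> (mult b a) v" using h by (simp add: hom_dilation_def)
      also have "\<dots> = (S1 \<circ> \<pi>1 (mult b a) \<circ> T1) v" using h1 by (simp add: hom_dilation_def)
      also have "\<dots> = S1 (\<pi>1 b (\<pi>1 a (T1 v)))" using h1 by (simp add: hom_dilation_def)
      finally show ?thesis .
    qed
    then show "\<exists>y. \<forall>b. S (\<pi> b (\<pi> a (T v))) = S1 (\<pi>1 b y)" by blast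
  qed
  have "x \<in> W.span {\<pi> a (T v) | a v. True}" using lm by (simp add: linearly_minimal_def)
  then show ?thesis using W.span_minimal[OF gen sub] by blast
qed

lemma uniq:
  assumes h: "hom_dilation sA mult one sV \<phi> sW \<pi> S T"
    and irr: "irreducible_dil sW \<pi> S"
    and eq: "\<forall>b. S (\<pi> b x) = S (\<pi> b x')"
  shows "x = x'"
proof -
  interpret W: vector_space sW using h by (simp add: hom_dilation_def)
  have LS: "Vector_Spaces.linear sW sV (\<lambda>x. S (\<pi> b x))" for b
    using h lin_comp[of sW sW "\<pi> b" sV S] by (simp add: hom_dilation_def)
  have vV: "vector_space sV" using h by (simp add: hom_dilation_def linear_iff)
  interpret V: vector_space sV by fact
  let ?K = "{z. \<forall>b. S (\<pi> b z) = 0}"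
  have sub: "W.subspace ?K"
    unfolding W.subspace_def using lin_0[OF LS] lin_add[OF LS] lin_scale[OF LS]
      V.scale_zero_right by auto
  have ker: "?K \<subseteq> {w. S w = 0}"
  proof
    fix z assume "z \<in> ?K"
    then have "S (\<pi> one z) = 0" by auto
    then show "z \<in> {w. S w = 0}" using h by (simp add: hom_dilation_def)
  qed
  have inv: "\<forall>a. \<pi> a ` ?K \<subseteq> ?K"
  proof (intro allI subsetI)
    fix a w assume "w \<in> \<pi> a ` ?K"
    then obtain z where z: "z \<in> ?K" "w = \<pi> a z" by auto
    have "S (\<pi> b w) = 0" for b
    proof -
      have "\<pi> b w = \<pi> (mult b a) z" using h z by (simp add: hom_dilation_def)
      then show ?thesis using z by simp
    qed
    then show "w \<in> ?K" by simp
  qed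
  have K0: "?K = {0}" using irr sub ker inv unfolding irreducible_dil_def by blast
  have "S (\<pi> b (x - x')) = 0" for b
  proof -
    have "S (\<pi> b x) = S (\<pi> b (x - x')) + S (\<pi> b x')"
      using lin_add[OF LS, of b "x - x'" x'] by simp
    then show ?thesis using eq by simp
  qed
  then have "x - x' \<in> ?K" by simp
  then show ?thesis using K0 by simp
qed

lemma fin_lemma:
  assumes h1: "hom_dilation sA mult one sV \<phi> sW1 \<pi>1 S1 T1"
    and lm: "linearly_minimal sW1 \<pi>1 T1"
    and vA: "vector_space sA" and vV: "vector_space sV"
    and finA: "fin_dim sA" and finV: "fin_dim sV"
  shows "\<exists>B. finite B \<and> module.span sW1 B = UNIV \<and>
           card B \<le> vector_space.dim sA UNIV * vector_space.dim sV UNIV"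
proof -
  interpret A: vector_space sA by fact
  interpret V: vector_space sV by fact
  interpret W1: vector_space sW1 using h1 by (simp add: hom_dilation_def)
  interpret PA: vector_space_pair sA sW1 ..
  interpret PV: vector_space_pair sV sW1 ..
  obtain BA where BA: "A.independent BA" "UNIV \<subseteq> A.span BA" "card BA = A.dim UNIV"
    using A.basis_exists[of UNIV] by blast
  obtain BA0 where "finite BA0" "A.span BA0 = UNIV" using finA by (auto simp: fin_dim_def)
  then have fBA: "finite BA" using A.independent_span_bound[of BA0 BA] BA by auto
  obtain BV where BV: "V.independent BV" "UNIV \<subseteq> V.span BV" "card BV = V.dim UNIV"
    using V.basis_exists[of UNIV] by blast
  obtain BV0 where "finite BV0" "V.span BV0 = UNIV" using finV by (auto simp: fin_dim_def)
  then have fBV: "finite BV" using V.independent_span_bound[of BV0 BV] BV by auto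
  define B where "B = (\<lambda>(a,v). \<pi>1 a (T1 v)) ` (BA \<times> BV)"
  have fB: "finite B" using fBA fBV by (simp add: B_def)
  have cB: "card B \<le> card BA * card BV"
    unfolding B_def using card_image_le[of "BA \<times> BV" "\<lambda>(a,v). \<pi>1 a (T1 v)"] fBA fBV
    by (simp add: card_cartesian_product)
  have gen: "\<pi>1 a (T1 v) \<in> W1.span B" for a v
  proof -
    have La: "Vector_Spaces.linear sA sW1 (\<lambda>a. \<pi>1 a (T1 v))"
      using h1 by (simp add: hom_dilation_def linear_iff vA W1.vector_space_axioms)
    have sub1: "(\<lambda>a. \<pi>1 a (T1 v)) ` BA \<subseteq> W1.span B"
    proof
      fix w assume "w \<in> (\<lambda>a. \<pi>1 a (T1 v)) ` BA"
      then obtain a' where a': "a' \<in> BA" "w = \<pi>1 a' (T1 v)" by auto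
      have Lv: "Vector_Spaces.linear sV sW1 (\<lambda>v. \<pi>1 a' (T1 v))"
        using h1 lin_comp[of sV sW1 T1 sW1 "\<pi>1 a'"] by (simp add: hom_dilation_def)
      have "(\<lambda>v. \<pi>1 a' (T1 v)) ` BV \<subseteq> B" using a' by (auto simp: B_def)
      then have "W1.span ((\<lambda>v. \<pi>1 a' (T1 v)) ` BV) \<subseteq> W1.span B" by (rule W1.span_mono)
      moreover have "w \<in> W1.span ((\<lambda>v. \<pi>1 a' (T1 v)) ` BV)"
        unfolding PV.linear_span_image[OF Lv] using a' BV(2) by auto
      ultimately show "w \<in> W1.span B" by blast
    qed
    have "W1.span ((\<lambda>a. \<pi>1 a (T1 v)) ` BA) \<subseteq> W1.span B"
      using W1.span_minimal[OF sub1] by simp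
    moreover have "\<pi>1 a (T1 v) \<in> W1.span ((\<lambda>a. \<pi>1 a (T1 v)) ` BA)"
      unfolding PA.linear_span_image[OF La] using BA(2) by auto
    ultimately show ?thesis by blast
  qed
  have "W1.span {\<pi>1 a (T1 v) | a v. True} \<subseteq> W1.span B"
    using gen by (intro W1.span_minimal) auto
  then have "W1.span B = UNIV" using lm by (auto simp: linearly_minimal_def)
  then show ?thesis using fB cB BA(3) BV(3) by auto
qed

lemma main_ii:
  assumes h: "hom_dilation sA mult one sV \<phi> sW \<pi> S T"
    and pr: "principle_dil sW \<pi> S T"
    and h1: "hom_dilation sA mult one sV \<phi> sW1 \<pi>1 S1 T1"
    and lm1: "linearly_minimal sW1 \<pi>1 T1"
    and fin1: "finite B1" "module.span sW1 B1 = UNIV"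
    and dle: "vector_space.dim sW1 UNIV \<le> vector_space.dim sW UNIV"
  shows "irreducible_dil sW1 \<pi>1 S1"
proof -
  interpret W: vector_space sW using h by (simp add: hom_dilation_def)
  interpret W1: vector_space sW1 using h1 by (simp add: hom_dilation_def)
  interpret P: vector_space_pair sW1 sW ..
  have lm: "linearly_minimal sW \<pi> T" and irr: "irreducible_dil sW \<pi> S"
    using pr by (auto simp: principle_dil_def)
  have LS: "Vector_Spaces.linear sW sV (\<lambda>x. S (\<pi> b x))" for b
    using h lin_comp[of sW sW "\<pi> b" sV S] by (simp add: hom_dilation_def)
  have LS1: "Vector_Spaces.linear sW1 sV (\<lambda>x. S1 (\<pi>1 b x))" for b
    using h1 lin_comp[of sW1 sW1 "\<pi>1 b" sV S1] by (simp add: hom_dilation_def)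
  define \<Phi> where "\<Phi> y = (SOME x. \<forall>b. S (\<pi> b x) = S1 (\<pi>1 b y))" for y
  have rel: "\<forall>b. S (\<pi> b (\<Phi> y)) = S1 (\<pi>1 b y)" for y
  proof -
    obtain x where "\<forall>b. S1 (\<pi>1 b y) = S (\<pi> b x)" using rel_ex[OF h1 h lm1] by blast
    then have "\<exists>x. \<forall>b. S (\<pi> b x) = S1 (\<pi>1 b y)" by metis
    then show ?thesis unfolding \<Phi>_def by (rule someI_ex)
  qed
  have U: "\<forall>b. S (\<pi> b x) = S1 (\<pi>1 b y) \<Longrightarrow> \<Phi> y = x" for x y
    using uniq[OF h irr, of "\<Phi> y" x] rel[of y] by simp
  have lin: "Vector_Spaces.linear sW1 sW \<Phi>"
    unfolding linear_iff
  proof (intro conjI allI)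
    show "vector_space sW1" "vector_space sW" by unfold_locales
  next
    fix y y'
    show "\<Phi> (y + y') = \<Phi> y + \<Phi> y'"
      by (rule U) (simp add: lin_add[OF LS] lin_add[OF LS1] rel)
  next
    fix c y
    show "\<Phi> (sW1 c y) = sW c (\<Phi> y)"
      by (rule U) (simp add: lin_scale[OF LS] lin_scale[OF LS1] rel)
  qed
  have surjP: "x \<in> \<Phi> ` UNIV" for x
  proof -
    obtain y where "\<forall>b. S (\<pi> b x) = S1 (\<pi>1 b y)" using rel_ex[OF h h1 lm] by blast
    then have "\<Phi> y = x" by (rule U)
    then show ?thesis by blast
  qed
  show ?thesis
    unfolding irreducible_dil_def
  proof (intro allI impI)
    fix Uu assume A: "W1.subspace Uu \<and> Uu \<subseteq> {w. S1 w = 0} \<and> (\<forall>a. \<pi>1 a ` Uu \<subseteq> Uu)"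
    show "Uu = {0}"
    proof (rule ccontr)
      assume "Uu \<noteq> {0}"
      moreover have "0 \<in> Uu" using A W1.subspace_0 by blast
      ultimately obtain j where j: "j \<in> Uu" "j \<noteq> 0" by blast
      have "\<Phi> j = 0"
      proof (rule U, intro allI)
        fix b
        have "\<pi>1 b j \<in> Uu" using A j by blast
        then have "S1 (\<pi>1 b j) = 0" using A by blast
        then show "S (\<pi> b 0) = S1 (\<pi>1 b j)" using lin_0[OF LS] by simp
      qed
      have ij: "W1.independent {j}"
        by (rule W1.independent_insertI) (use j(2) in \<open>auto simp: W1.span_empty W1.independent_empty\<close>)
      obtain B where B: "{j} \<subseteq> B" "W1.independent B" "UNIV \<subseteq> W1.span B"
        by (rule W1.maximal_independent_subset_extend[of "{j}" UNIV]) (use ij in \<open>simp_all\<close>)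
      have fB: "finite B" using W1.independent_span_bound[OF fin1(1) B(2)] fin1(2) by auto
      have cB: "card B = W1.dim UNIV" using W1.basis_card_eq_dim[of B UNIV] B by auto
      have "UNIV = \<Phi> ` W1.span B" using surjP B(3) by auto
      also have "\<dots> = W.span (\<Phi> ` B)" by (rule P.linear_span_image[OF lin, symmetric])
      also have "\<dots> \<subseteq> W.span (insert 0 (\<Phi> ` (B - {j})))"
        by (rule W.span_mono) (use \<open>\<Phi> j = 0\<close> in auto)
      also have "\<dots> = W.span (\<Phi> ` (B - {j}))" by simp
      finally have "UNIV \<subseteq> W.span (\<Phi> ` (B - {j}))" .
      then have "W.dim UNIV \<le> card (\<Phi> ` (B - {j}))"
        using fB by (intro W.dim_le_card) auto
      also have "\<dots> \<le> card (B - {j})" using fB by (intro card_image_le) auto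
      also have "\<dots> < card B" using fB B(1) by (intro card_Diff1_less) auto
      finally show False using cB dle by simp
    qed
  qed
qed

theorem corollary3p4:
  fixes sA :: "'f::field \<Rightarrow> 'a::ab_group_add \<Rightarrow> 'a"
    and mult :: "'a \<Rightarrow> 'a \<Rightarrow> 'a" and one :: 'a
    and sV :: "'f \<Rightarrow> 'v::ab_group_add \<Rightarrow> 'v" and \<phi> :: "'a \<Rightarrow> 'v \<Rightarrow> 'v"
    and sW :: "'f \<Rightarrow> 'w::ab_group_add \<Rightarrow> 'w" and \<pi> :: "'a \<Rightarrow> 'w \<Rightarrow> 'w"
    and S :: "'w \<Rightarrow> 'v" and T :: "'v \<Rightarrow> 'w"
    and sW1 :: "'f \<Rightarrow> 'w1::ab_group_add \<Rightarrow> 'w1" and \<pi>1 :: "'a \<Rightarrow> 'w1 \<Rightarrow> 'w1"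
    and S1 :: "'w1 \<Rightarrow> 'v" and T1 :: "'v \<Rightarrow> 'w1"
  assumes sys: "linear_system sA mult one sV \<phi>"
    and finA: "fin_dim sA" and finV: "fin_dim sV"
  shows "(hom_dilation sA mult one sV \<phi> sW \<pi> S T \<and> principle_dil sW \<pi> S T \<and>
          dimension sW = dimension sA * dimension sV \<longrightarrow>
          (hom_dilation sA mult one sV \<phi> sW1 \<pi>1 S1 T1 \<and> linearly_minimal sW1 \<pi>1 T1 \<longrightarrow>
           irreducible_dil sW1 \<pi>1 S1 \<and> principle_dil sW1 \<pi>1 S1 T1))
       \<and> (hom_dilation sA mult one sV \<phi> sW \<pi> S T \<and> principle_dil sW \<pi> S T \<and>
          hom_dilation sA mult one sV \<phi> sW1 \<pi>1 S1 T1 \<and> linearly_minimal sW1 \<pi>1 T1 \<and>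
          dimension sW1 \<le> dimension sW \<longrightarrow>
          irreducible_dil sW1 \<pi>1 S1)"
proof -
  have vA: "vector_space sA" and vV: "vector_space sV"
    using sys by (auto simp: linear_system_def unital_algebra_def)
  have F: "\<exists>B. finite B \<and> module.span sW1 B = UNIV \<and> card B \<le> dimension sA * dimension sV"
    if h1: "hom_dilation sA mult one sV \<phi> sW1 \<pi>1 S1 T1" and lm: "linearly_minimal sW1 \<pi>1 T1"
    using fin_lemma[OF h1 lm vA vV finA finV] .
  show ?thesis
  proof (intro conjI impI)
    assume H: "hom_dilation sA mult one sV \<phi> sW \<pi> S T \<and> principle_dil sW \<pi> S T \<and>
          dimension sW = dimension sA * dimension sV"
      and H1: "hom_dilation sA mult one sV \<phi> sW1 \<pi>1 S1 T1 \<and> linearly_minimal sW1 \<pi>1 T1"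
    interpret W1: vector_space sW1 using H1 by (simp add: hom_dilation_def)
    obtain B where B: "finite B" "W1.span B = UNIV" "card B \<le> dimension sA * dimension sV"
      using F H1 by blast
    have "W1.dim UNIV \<le> card B" using B by (intro W1.dim_le_card) auto
    then have "W1.dim UNIV \<le> dimension sW" using B H by simp
    then have irr: "irreducible_dil sW1 \<pi>1 S1" using main_ii[of sA mult one sV \<phi> sW \<pi> S T sW1 \<pi>1 S1 T1 B] H H1 B by blast
    then show "irreducible_dil sW1 \<pi>1 S1" .
    show "principle_dil sW1 \<pi>1 S1 T1" using irr H1 by (simp add: principle_dil_def)
  next
    assume H: "hom_dilation sA mult one sV \<phi> sW \<pi> S T \<and> principle_dil sW \<pi> S T \<and>
          hom_dilation sA mult one sV \<phi> sW1 \<pi>1 S1 T1 \<and> linearly_minimal sW1 \<pi>1 T1 \<and>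
          dimension sW1 \<le> dimension sW"
    obtain B where B: "finite B" "module.span sW1 B = UNIV"
      using F H by blast
    show "irreducible_dil sW1 \<pi>1 S1" using main_ii[of sA mult one sV \<phi> sW \<pi> S T sW1 \<pi>1 S1 T1 B] H B by blast
  qed
qed

end
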